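(* Let $x_n=2^{-n}$ for $n\in\mathbb N$, and let $(y_n)$ be a sequence of real numbers such that $\sum_n y_n$ is absolutely convergent and $y_n\neq\sum_{i>n}y_i$ for every $n\in\mathbb N$. Then every point of the achievement set $E(x_n,y_n)\subset\mathbb R^2$ has a unique representation, and $E(x_n,y_n)$ is a Cantor set.
   Context: For an absolutely convergent series $\sum_n v_n$ in $\mathbb R^d$, its achievement set is $E(v)=\{\sum_{n=1}^\infty \varepsilon_n v_n : (\varepsilon_n)\in\{0,1\}^{\mathbb N}\}$; $E(x_n,y_n)$ denotes the achievement set of $((x_n,y_n))_n$ in $\mathbb R^2$. A point $a$ has a unique representation if there is exactly one set $A\subset\mathbb N$ with $a=\sum_{i\in A}(x_i,y_i)$. A Cantor set is a nonempty, totally disconnected, perfect, compact subset of $\mathbb R^n$. *)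

theory Defs
  imports "HOL-Analysis.Analysis"
begin

text \<open>Sequences are indexed from 0 here; index n corresponds to the paper's index n+1.\<close>

definition subsum :: "(nat \<Rightarrow> 'a::real_normed_vector) \<Rightarrow> nat set \<Rightarrow> 'a" where
  "subsum v A = (\<Sum>n. (if n \<in> A then v n else 0))"

definition achievement_set :: "(nat \<Rightarrow> 'a::real_normed_vector) \<Rightarrow> 'a set" where
  "achievement_set v = {subsum v A | A. True}"

definition unique_representation :: "(nat \<Rightarrow> 'a::real_normed_vector) \<Rightarrow> 'a \<Rightarrow> bool" where
  "unique_representation v a \<longleftrightarrow> (\<exists>!A. a = subsum v A)"

definition totally_disconnected :: "'a::topological_space set \<Rightarrow> bool" where
  "totally_disconnected S \<longleftrightarrow> (\<forall>C. C \<subseteq> S \<and> connected C \<longrightarrow> (\<exists>x. C \<subseteq> {x}))"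

definition perfect_set :: "'a::topological_space set \<Rightarrow> bool" where
  "perfect_set S \<longleftrightarrow> closed S \<and> (\<forall>x\<in>S. x islimpt S)"

definition cantor_set :: "'a::topological_space set \<Rightarrow> bool" where
  "cantor_set S \<longleftrightarrow> S \<noteq> {} \<and> totally_disconnected S \<and> perfect_set S \<and> compact S"

end

theory Submission
  imports Defs
begin

lemma core1:
  fixes y d :: "nat \<Rightarrow> real"
  assumes sy: "summable (\<lambda>n. \<bar>y n\<bar>)"
    and hy: "y n \<noteq> (\<Sum>i. y (i + Suc n))"
    and dv: "\<And>i. d i \<in> {-1,0,1}"
    and dn: "d n = 1" and dlow: "\<And>i. i < n \<Longrightarrow> d i = 0"
    and s1: "(\<Sum>i. d i * (1/2)^Suc i) = 0"
    and s2: "(\<Sum>i. d i * y i) = 0"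
  shows False
proof -
  have db: "\<bar>d i\<bar> \<le> 1" for i using dv[of i] by auto
  have sm1: "summable (\<lambda>i. d i * (1/2)^Suc i)"
    by (rule summable_comparison_test[where g="\<lambda>i. (1/2)^Suc i"])
       (auto simp: abs_mult intro!: mult_left_le_one_le db summable_geometric)
  have sm2: "summable (\<lambda>i. d i * y i)"
    by (rule summable_comparison_test[OF _ sy]) (auto simp: abs_mult intro!: mult_left_le_one_le db exI[of _ 0])
  have z0: "(\<Sum>i<n. d i * (1/2)^Suc i) = 0" "(\<Sum>i<n. d i * y i) = 0"
    using dlow by auto
  have a1: "(\<Sum>i. d (i+n) * (1/2)^Suc (i+n)) = 0"
    using suminf_split_initial_segment[OF sm1, of n] s1 z0 by simp
  have a2: "(\<Sum>i. d (i+n) * y (i+n)) = 0"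
    using suminf_split_initial_segment[OF sm2, of n] s2 z0 by simp
  have sm1': "summable (\<lambda>i. d (i+n) * (1/2)^Suc (i+n))"
    using sm1 summable_iff_shift[of "\<lambda>i. d i * (1/2)^Suc i" n] by simp
  have sm2': "summable (\<lambda>i. d (i+n) * y (i+n))"
    using sm2 summable_iff_shift[of "\<lambda>i. d i * y i" n] by simp
  have b1: "(\<Sum>i. d (Suc i+n) * (1/2)^Suc (Suc i+n)) = - ((1/2)^Suc n)"
    using suminf_split_head[OF sm1'] a1 dn by simp
  have b2: "(\<Sum>i. d (Suc i+n) * y (Suc i+n)) = - y n"
    using suminf_split_head[OF sm2'] a2 dn by simp
  have smg: "summable (\<lambda>i. (1/2::real)^Suc (Suc i+n))"
    by (simp add: power_add summable_mult2 summable_mult summable_geometric)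
  have g: "(\<Sum>i. (1/2::real)^Suc (Suc i+n)) = (1/2)^Suc n"
  proof -
    have "(\<Sum>i. (1/2::real)^Suc (Suc i+n)) = (\<Sum>i. (1/2)^i * ((1/2)^Suc (Suc n)))"
      by (simp add: power_add mult_ac)
    also have "\<dots> = (\<Sum>i. (1/2::real)^i) * (1/2)^Suc (Suc n)"
      by (rule suminf_mult2[symmetric]) (simp add: summable_geometric)
    also have "\<dots> = (1/2)^Suc n" by (simp add: suminf_geometric)
    finally show ?thesis .
  qed
  have sm1'': "summable (\<lambda>i. d (Suc i+n) * (1/2)^Suc (Suc i+n))"
    using sm1' summable_iff_shift[of "\<lambda>i. d (i+n) * (1/2)^Suc (i+n)" 1] by simp
  define P where "P i = (1/2::real)^Suc (Suc i+n)" for i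
  have sm1p: "summable (\<lambda>i. d (Suc i+n) * P i)" using sm1'' unfolding P_def .
  have smgp: "summable P" using smg unfolding P_def .
  have "(\<Sum>i. (d (Suc i+n) + 1) * P i) = (\<Sum>i. d (Suc i+n) * P i) + (\<Sum>i. P i)"
    unfolding distrib_right using suminf_add[OF sm1p smgp] by simp
  also have "\<dots> = 0" using b1 g unfolding P_def by simp
  finally have "(\<Sum>i. (d (Suc i+n) + 1) * P i) = 0" .
  moreover have "summable (\<lambda>i. (d (Suc i+n) + 1) * P i)"
    unfolding distrib_right using summable_add[OF sm1p smgp] by simp
  moreover have "\<And>i. 0 \<le> (d (Suc i+n) + 1) * P i"
  proof -
    fix i have "0 \<le> d (Suc i+n) + 1" using db[of "Suc i+n"] by (simp add: abs_le_iff)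
    thus "0 \<le> (d (Suc i+n) + 1) * P i" unfolding P_def by simp
  qed
  ultimately have "\<forall>i. (d (Suc i+n) + 1) * P i = 0"
    using suminf_eq_zero_iff by blast
  hence dm: "d (Suc i+n) = -1" for i unfolding P_def by (auto simp: add_eq_0_iff)
  have "(\<Sum>i. d (Suc i+n) * y (Suc i+n)) = - (\<Sum>i. y (i + Suc n))"
  proof -
    have "summable y" using sy by (rule summable_rabs_cancel)
    hence "summable (\<lambda>i. y (Suc i + n))"
      using summable_iff_shift[of y "Suc n"] by (simp add: add.commute)
    thus ?thesis using dm by (simp add: suminf_minus)
  qed
  with b2 hy show False by simp
qed


lemma core:
  fixes y d :: "nat \<Rightarrow> real"
  assumes sy: "summable (\<lambda>n. \<bar>y n\<bar>)"
    and hy: "\<And>n. y n \<noteq> (\<Sum>i. y (i + Suc n))"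
    and dv: "\<And>i. d i \<in> {-1,0,1}"
    and s1: "(\<Sum>i. d i * (1/2)^Suc i) = 0"
    and s2: "(\<Sum>i. d i * y i) = 0"
  shows "d i = 0"
proof (rule ccontr)
  assume "d i \<noteq> 0"
  define n where "n = (LEAST n. d n \<noteq> 0)"
  have dn0: "d n \<noteq> 0" unfolding n_def by (rule LeastI[of _ i]) fact
  have low: "\<And>j. j < n \<Longrightarrow> d j = 0" unfolding n_def using not_less_Least by blast
  show False
  proof (cases "d n = 1")
    case True
    show False by (rule core1[OF sy hy dv True low s1 s2])
  next
    case False
    with dn0 dv[of n] have dm: "d n = -1" by auto
    have db: "\<bar>d i\<bar> \<le> 1" for i using dv[of i] by auto
    have sm1: "summable (\<lambda>i. d i * (1/2)^Suc i)"
      by (rule summable_comparison_test[where g="\<lambda>i. (1/2)^Suc i"])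
         (auto simp: abs_mult intro!: mult_left_le_one_le db summable_geometric)
    have sm2: "summable (\<lambda>i. d i * y i)"
      by (rule summable_comparison_test[OF _ sy]) (auto simp: abs_mult intro!: mult_left_le_one_le db exI[of _ 0])
    have t1: "(\<Sum>i. (- d i) * (1/2)^Suc i) = 0"
      using suminf_minus[OF sm1] s1 by simp
    have t2: "(\<Sum>i. (- d i) * y i) = 0"
      using suminf_minus[OF sm2] s2 by simp
    show False
      by (rule core1[of y n "\<lambda>i. - d i", OF sy hy _ _ _ t1 t2]) (use dv dm low in auto)
  qed
qed

definition vv :: "(nat \<Rightarrow> real) \<Rightarrow> nat \<Rightarrow> real \<times> real" where
  "vv y n = ((1/2)^Suc n, y n)"
definition KK :: "(nat \<Rightarrow> real) set" where
  "KK = PiE UNIV (\<lambda>_. {0,1})"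
definition FF :: "(nat \<Rightarrow> real) \<Rightarrow> (nat \<Rightarrow> real) \<Rightarrow> real \<times> real" where
  "FF y e = (\<Sum>n. e n *\<^sub>R vv y n)"

lemma KK_le: "e \<in> KK \<Longrightarrow> \<bar>e n\<bar> \<le> 1"
  unfolding KK_def by (simp add: PiE_iff) (metis abs_0 abs_one order_refl zero_le_one)

lemma summable_vv: "summable (\<lambda>n. \<bar>y n\<bar>) \<Longrightarrow> summable (\<lambda>n. norm (vv y n))"
proof -
  assume sy: "summable (\<lambda>n. \<bar>y n\<bar>)"
  have "summable (\<lambda>n. (1/2::real)^Suc n + \<bar>y n\<bar>)"
    by (intro summable_add sy) (simp add: summable_geometric)
  thus ?thesis
    by (rule summable_comparison_test[rotated])
       (auto simp: vv_def intro!: exI[of _ 0] order.trans[OF norm_Pair_le])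
qed

lemma summable_e: "summable (\<lambda>n. \<bar>y n\<bar>) \<Longrightarrow> (\<And>n. \<bar>e n\<bar> \<le> 1) \<Longrightarrow> summable (\<lambda>n. e n *\<^sub>R vv y n)"
  apply (rule summable_norm_cancel)
  apply (rule summable_comparison_test[OF _ summable_vv])
  by (auto intro!: exI[of _ 0] mult_left_le_one_le)

lemma FF_inj:
  fixes y :: "nat \<Rightarrow> real"
  assumes sy: "summable (\<lambda>n. \<bar>y n\<bar>)"
    and hy: "\<And>n. y n \<noteq> (\<Sum>i. y (i + Suc n))"
    and e1: "e1 \<in> KK" and e2: "e2 \<in> KK" and eq: "FF y e1 = FF y e2"
  shows "e1 = e2"
proof -
  define d where "d i = e1 i - e2 i" for i
  have s1: "summable (\<lambda>n. e1 n *\<^sub>R vv y n)" by (rule summable_e[OF sy KK_le[OF e1]])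
  have s2: "summable (\<lambda>n. e2 n *\<^sub>R vv y n)" by (rule summable_e[OF sy KK_le[OF e2]])
  have sd: "summable (\<lambda>n. d n *\<^sub>R vv y n)"
    using summable_diff[OF s1 s2] by (simp add: d_def scaleR_diff_left)
  have "(\<Sum>n. d n *\<^sub>R vv y n) = 0"
    using suminf_diff[OF s1 s2] eq unfolding FF_def by (simp add: d_def scaleR_diff_left)
  hence z1: "fst (\<Sum>n. d n *\<^sub>R vv y n) = 0" and z2: "snd (\<Sum>n. d n *\<^sub>R vv y n) = 0" by auto
  have "(\<Sum>i. d i * (1/2)^Suc i) = 0"
    using z1 bounded_linear.suminf[OF bounded_linear_fst sd] by (simp add: vv_def)
  moreover have "(\<Sum>i. d i * y i) = 0"
    using z2 bounded_linear.suminf[OF bounded_linear_snd sd] by (simp add: vv_def)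
  moreover have "d i \<in> {-1,0,1}" for i
  proof -
    have "e1 i \<in> {0,1}" "e2 i \<in> {0,1}" using e1 e2 unfolding KK_def by auto
    thus ?thesis unfolding d_def by auto
  qed
  ultimately have "d i = 0" for i using core[OF sy hy] by blast
  thus ?thesis unfolding d_def by (auto simp: fun_eq_iff)
qed

lemma FF_cont:
  assumes sy: "summable (\<lambda>n. \<bar>y n\<bar>)"
  shows "continuous_on KK (FF y)"
proof -
  have ul: "uniform_limit KK (\<lambda>n e. \<Sum>i<n. e i *\<^sub>R vv y i) (\<lambda>e. \<Sum>i. e i *\<^sub>R vv y i) sequentially"
    by (rule Weierstrass_m_test[OF _ summable_vv[OF sy]])
       (auto intro!: mult_left_le_one_le KK_le)
  show ?thesis unfolding FF_def
    by (rule uniform_limit_theorem[OF _ ul])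
       (auto intro!: always_eventually continuous_intros continuous_on_subset[OF continuous_on_product_coordinates])
qed

lemma KK_compact: "compact KK"
proof -
  have "compactin (product_topology (\<lambda>i. euclidean) UNIV) (PiE UNIV (\<lambda>_::nat. {0,1::real}))"
    by (subst compactin_PiE) auto
  thus ?thesis unfolding KK_def euclidean_product_topology by simp
qed


lemma FF_flip:
  assumes sy: "summable (\<lambda>n. \<bar>y n\<bar>)" and e: "e \<in> KK"
  shows "FF y (e(k := 1 - e k)) = FF y e + (1 - 2 * e k) *\<^sub>R vv y k"
proof -
  have s1: "summable (\<lambda>n. e n *\<^sub>R vv y n)" by (rule summable_e[OF sy KK_le[OF e]])
  have s2: "(\<lambda>n. if n = k then (1 - 2 * e k) *\<^sub>R vv y k else 0) sums ((1 - 2 * e k) *\<^sub>R vv y k)"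
    using sums_single[of k "\<lambda>_. (1 - 2 * e k) *\<^sub>R vv y k"] by simp
  have "(\<lambda>n. e n *\<^sub>R vv y n + (if n = k then (1 - 2 * e k) *\<^sub>R vv y k else 0)) sums (FF y e + (1 - 2 * e k) *\<^sub>R vv y k)"
    unfolding FF_def by (rule sums_add[OF summable_sums[OF s1] s2])
  moreover have "(\<lambda>n. e n *\<^sub>R vv y n + (if n = k then (1 - 2 * e k) *\<^sub>R vv y k else 0)) = (\<lambda>n. (e(k := 1 - e k)) n *\<^sub>R vv y n)"
    by (auto simp: fun_eq_iff algebra_simps scaleR_add_left[symmetric])
  ultimately show ?thesis unfolding FF_def by (simp add: sums_iff)
qed

lemma ach_eq: "achievement_set (vv y) = FF y ` KK"
  and subsum_eq: "subsum (vv y) A = FF y (\<lambda>n. of_bool (n \<in> A))"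
  and ind_KK: "(\<lambda>n. of_bool (n \<in> A)) \<in> KK"
proof -
  have se: "subsum (vv y) A = FF y (\<lambda>n. of_bool (n \<in> A))" for A
    unfolding subsum_def FF_def by (intro suminf_cong) simp
  have ik: "(\<lambda>n. of_bool (n \<in> A)) \<in> KK" for A unfolding KK_def by auto
  show "subsum (vv y) A = FF y (\<lambda>n. of_bool (n \<in> A))" by (rule se)
  show "(\<lambda>n. of_bool (n \<in> A)) \<in> KK" by (rule ik)
  show "achievement_set (vv y) = FF y ` KK"
  proof
    show "achievement_set (vv y) \<subseteq> FF y ` KK"
      unfolding achievement_set_def using se ik by auto
  next
    show "FF y ` KK \<subseteq> achievement_set (vv y)"
    proof
      fix x assume "x \<in> FF y ` KK"
      then obtain e where e: "e \<in> KK" and x: "x = FF y e" by auto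
      have "e = (\<lambda>n. of_bool (n \<in> {n. e n = 1}))"
        using e unfolding KK_def by (force simp: fun_eq_iff)
      hence "x = subsum (vv y) {n. e n = 1}" using x se by metis
      thus "x \<in> achievement_set (vv y)" unfolding achievement_set_def by blast
    qed
  qed
qed

theorem mainTheorem4:
  fixes y :: "nat \<Rightarrow> real"
  assumes "summable (\<lambda>n. \<bar>y n\<bar>)"
    and "\<And>n. y n \<noteq> (\<Sum>i. y (i + Suc n))"
  shows "(\<forall>a \<in> achievement_set (\<lambda>n. ((1/2::real) ^ Suc n, y n)).
            unique_representation (\<lambda>n. ((1/2::real) ^ Suc n, y n)) a)
       \<and> cantor_set (achievement_set (\<lambda>n. ((1/2::real) ^ Suc n, y n)))"
proof -
  note sy = assms(1) and hy = assms(2)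
  have vdef: "(\<lambda>n. ((1/2::real) ^ Suc n, y n)) = vv y" by (simp add: vv_def fun_eq_iff)
  note inj = FF_inj[OF sy hy]
  have injon: "inj_on (FF y) KK" using inj by (auto intro: inj_onI)
  have cont: "continuous_on KK (FF y)" by (rule FF_cont[OF sy])
  have cpt: "compact (FF y ` KK)" by (rule compact_continuous_image[OF cont KK_compact])
  have U: "\<forall>a \<in> achievement_set (vv y). unique_representation (vv y) a"
  proof
    fix a assume "a \<in> achievement_set (vv y)"
    then obtain A where A: "a = subsum (vv y) A" unfolding achievement_set_def by auto
    show "unique_representation (vv y) a" unfolding unique_representation_def
    proof (rule ex1I[of _ A])
      show "a = subsum (vv y) A" by (rule A)
      fix B assume "a = subsum (vv y) B"
      with A have "FF y (\<lambda>n. of_bool (n \<in> A)) = FF y (\<lambda>n. of_bool (n \<in> B))"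
        by (simp add: subsum_eq)
      hence "(\<lambda>n. of_bool (n \<in> A)::real) = (\<lambda>n. of_bool (n \<in> B))"
        using inj ind_KK by blast
      thus "B = A" by (auto simp: fun_eq_iff of_bool_eq_iff)
    qed
  qed
  have ne: "FF y ` KK \<noteq> {}" using ind_KK by blast
  have lim: "\<forall>x \<in> FF y ` KK. x islimpt (FF y ` KK)"
  proof
    fix x assume "x \<in> FF y ` KK"
    then obtain e where e: "e \<in> KK" and x: "x = FF y e" by auto
    define f where "f k = FF y (e(k := 1 - e k))" for k
    have ek: "e k \<in> {0,1}" for k using e unfolding KK_def by auto
    have fk: "e(k := 1 - e k) \<in> KK" for k using e ek[of k] unfolding KK_def by (auto simp: PiE_iff)
    have "f k \<in> FF y ` KK - {x}" for k
    proof -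
      have "e(k := 1 - e k) \<noteq> e" using ek[of k] by (auto simp: fun_eq_iff)
      hence "f k \<noteq> x" unfolding f_def x using inj[OF fk e] by blast
      thus ?thesis unfolding f_def using fk by auto
    qed
    moreover have "f \<longlonglongrightarrow> x"
    proof -
      have "(\<lambda>k. norm (vv y k)) \<longlonglongrightarrow> 0"
        by (rule summable_LIMSEQ_zero[OF summable_vv[OF sy]])
      hence "(\<lambda>k. (1 - 2 * e k) *\<^sub>R vv y k) \<longlonglongrightarrow> 0"
      proof (rule Lim_null_comparison[rotated], intro always_eventually allI)
        fix k have "\<bar>1 - 2 * e k\<bar> \<le> 1" using ek[of k] by auto
        thus "norm ((1 - 2 * e k) *\<^sub>R vv y k) \<le> norm (vv y k)"
          by (simp add: mult_left_le_one_le)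
      qed
      hence "(\<lambda>k. FF y e + (1 - 2 * e k) *\<^sub>R vv y k) \<longlonglongrightarrow> FF y e + 0"
        by (intro tendsto_add tendsto_const)
      thus ?thesis unfolding f_def x using FF_flip[OF sy e] by simp
    qed
    ultimately show "x islimpt (FF y ` KK)"
      unfolding islimpt_sequential by blast
  qed
  have td: "totally_disconnected (FF y ` KK)"
    unfolding totally_disconnected_def
  proof (intro allI impI)
    fix C assume C: "C \<subseteq> FF y ` KK \<and> connected C"
    define g where "g = inv_into KK (FF y)"
    have gc: "continuous_on (FF y ` KK) g"
      unfolding g_def by (rule continuous_on_inv[OF cont KK_compact]) (simp add: injon)
    have conn: "connected (g ` C)"
      using C by (intro connected_continuous_image continuous_on_subset[OF gc]) auto
    have gK: "g c \<in> KK" if "c \<in> C" for c using C that unfolding g_def by (auto intro: inv_into_into)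
    have fg: "FF y (g c) = c" if "c \<in> C" for c
    proof -
      have "c \<in> FF y ` KK" using C that by auto
      thus ?thesis unfolding g_def by (rule f_inv_into_f)
    qed
    have eqc: "c1 = c2" if c1: "c1 \<in> C" and c2: "c2 \<in> C" for c1 c2
    proof -
      have "g c1 i = g c2 i" for i
      proof (rule ccontr)
        assume ne: "g c1 i \<noteq> g c2 i"
        have cc: "connected ((\<lambda>z. z i) ` g ` C)"
          by (rule connected_continuous_image[OF continuous_on_subset[OF continuous_on_product_coordinates] conn]) auto
        have sub: "(\<lambda>z. z i) ` g ` C \<subseteq> {0,1}" using gK unfolding KK_def by auto
        have m1: "g c1 i \<in> (\<lambda>z. z i) ` g ` C" "g c2 i \<in> (\<lambda>z. z i) ` g ` C" using c1 c2 by auto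
        have v1: "g c1 i \<in> {0,1}" "g c2 i \<in> {0,1}" using m1 sub by blast+
        have "0 \<in> (\<lambda>z. z i) ` g ` C \<and> 1 \<in> (\<lambda>z. z i) ` g ` C"
        proof (cases "g c1 i = 0")
          case True
          with v1 ne have "g c2 i = 1" by auto
          with True m1 show ?thesis by metis
        next
          case False
          with v1 ne have "g c1 i = 1" "g c2 i = 0" by auto
          with m1 show ?thesis by metis
        qed
        hence "1/2 \<in> (\<lambda>z. z i) ` g ` C"
          using connectedD_interval[OF cc, of 0 1 "1/2"] by auto
        with sub have "(1/2::real) \<in> {0,1}" by blast
        thus False by simp
      qed
      hence "g c1 = g c2" by auto
      thus ?thesis using fg c1 c2 by metis
    qed
    show "\<exists>x. C \<subseteq> {x}"
    proof (cases "C = {}")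
      case True thus ?thesis by auto
    next
      case False then obtain c where "c \<in> C" by auto
      thus ?thesis using eqc by blast
    qed
  qed
  have "cantor_set (FF y ` KK)"
    unfolding cantor_set_def perfect_set_def
    using ne td lim cpt compact_imp_closed by blast
  thus ?thesis using U unfolding vdef ach_eq by blast
qed

end
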